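(* Let $\sigma\in S_t$ and $p\in S_k$, and let $m=\min(t,k)$. If $\mathrm{red}(p_1p_2\cdots p_m)\neq\mathrm{red}(\sigma_1\sigma_2\cdots\sigma_m)$, then the set $\{1\}$ is reversibly deletable for $p$ with respect to $\{(\sigma,[t-1])\}$.
   Context: Notation: $\mathrm{red}(w)$ replaces the $i$-th smallest letter of a word $w$ of distinct integers by $i$. A vincular pattern of length $\ell$ is $(\sigma,X)$ with $\sigma\in S_\ell$, $X\subseteq[\ell-1]$; $\pi\in S_n$ contains it if there are $i_1<\dots<i_\ell$ with $\mathrm{red}(\pi_{i_1}\cdots\pi_{i_\ell})=\sigma$ and $i_{x+1}=i_x+1$ for all $x\in X$; $(\sigma,[t-1])$ for $\sigma\in S_t$ is the consecutive pattern $\sigma$. For $p\in S_k$ and $w\in[n]^k$ with distinct letters and $\mathrm{red}(w)=p$, $S_n^B(p;w)$ is the set of $\pi\in S_n$ avoiding every pattern in $B$ with $\pi_i=w_i$ for $i\le k$. For a set of indices $R$, $d_R(\pi)$ is obtained from $\pi$ by deleting the letters in positions in $R$ and reducing; for a word $w$ with distinct letters, $d_R(w)$ deletes $w_r$ ($r\in R$) and subtracts from each remaining $w_i$ the number of $r\in R$ with $w_r<w_i$. A set $R\subseteq[k]$ is reversibly deletable for $p$ with respect to $B$ if for every $n$ and every such $w$ with $S_n^B(p;w)\neq\emptyset$, the map $d_R$ restricts to a bijection $S_n^B(p;w)\to S_{n-|R|}^B(d_R(p);d_R(w))$. *)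

theory Defs
  imports Main
begin

text \<open>Words and permutations are lists of positive naturals; positions are 1-indexed
  in the paper and 0-indexed in lists (position i of the paper is list index i-1).\<close>

definition is_perm :: "nat \<Rightarrow> nat list \<Rightarrow> bool" where
  "is_perm n \<pi> \<longleftrightarrow> distinct \<pi> \<and> set \<pi> = {1..n}"

definition red :: "nat list \<Rightarrow> nat list" where
  "red w = map (\<lambda>x. card {y \<in> set w. y \<le> x}) w"

text \<open>A vincular pattern is a pair (sigma, X), X a set of 1-indexed adjacency positions.\<close>
type_synonym vpattern = "nat list \<times> nat set"

definition contains :: "nat list \<Rightarrow> vpattern \<Rightarrow> bool" where
  "contains \<pi> P \<longleftrightarrow> (case P of (\<sigma>, X) \<Rightarrow>
     (\<exists>is. length is = length \<sigma> \<and> sorted_wrt (<) is \<and> (\<forall>j\<in>set is. j < length \<pi>) \<and>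
        red (map (\<lambda>j. \<pi> ! j) is) = \<sigma> \<and>
        (\<forall>x\<in>X. is ! x = is ! (x - 1) + 1)))"

definition avoids :: "vpattern set \<Rightarrow> nat list \<Rightarrow> bool" where
  "avoids B \<pi> \<longleftrightarrow> (\<forall>P\<in>B. \<not> contains \<pi> P)"

definition Sprefix :: "nat \<Rightarrow> vpattern set \<Rightarrow> nat list \<Rightarrow> nat list \<Rightarrow> nat list set" where
  "Sprefix n B p w = {\<pi>. is_perm n \<pi> \<and> avoids B \<pi> \<and> (\<forall>i<length w. \<pi> ! i = w ! i)}"

definition keep :: "nat set \<Rightarrow> nat list \<Rightarrow> nat list" where
  "keep R xs = nths xs {i. Suc i \<notin> R}"

definition d_perm :: "nat set \<Rightarrow> nat list \<Rightarrow> nat list" where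
  "d_perm R \<pi> = red (keep R \<pi>)"

definition d_word :: "nat set \<Rightarrow> nat list \<Rightarrow> nat list" where
  "d_word R w = map (\<lambda>x. x - card {r \<in> R. 1 \<le> r \<and> r \<le> length w \<and> w ! (r - 1) < x}) (keep R w)"

definition rev_deletable :: "nat list \<Rightarrow> vpattern set \<Rightarrow> nat set \<Rightarrow> bool" where
  "rev_deletable p B R \<longleftrightarrow> R \<subseteq> {1..length p} \<and>
     (\<forall>n w. length w = length p \<and> distinct w \<and> set w \<subseteq> {1..n} \<and> red w = p \<and>
        Sprefix n B p w \<noteq> {} \<longrightarrow>
        bij_betw (d_perm R) (Sprefix n B p w)
          (Sprefix (n - card R) B (d_perm R p) (d_word R w)))"

end

theory Submission
  imports Defs
begin


definition rk :: "nat list \<Rightarrow> nat \<Rightarrow> nat" where "rk w x = card {y \<in> set w. y \<le> x}"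

lemma red_rk: "red w = map (rk w) w" by (simp add: red_def rk_def)

lemma rk_mono: assumes "x \<in> set w" "y \<in> set w" "x < y" shows "rk w x < rk w y"
proof -
  have "y \<in> {z\<in>set w. z \<le> y}" "y \<notin> {z\<in>set w. z \<le> x}" using assms by auto
  moreover have "{z\<in>set w. z \<le> x} \<subseteq> {z\<in>set w. z \<le> y}" using assms by auto
  ultimately have "{z\<in>set w. z \<le> x} \<subset> {z\<in>set w. z \<le> y}" by blast
  then show ?thesis unfolding rk_def by (intro psubset_card_mono) auto
qed

lemma red_map_mono:
  assumes "\<forall>x\<in>set xs. \<forall>y\<in>set xs. x < y \<longrightarrow> f x < f (y::nat)"
  shows "red (map f xs) = red xs"
proof -
  have inj: "inj_on f (set xs)"
    by (metis assms inj_onI linorder_neq_iff order_less_irrefl)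
  have le: "\<And>x y. x \<in> set xs \<Longrightarrow> y \<in> set xs \<Longrightarrow> f y \<le> f x \<longleftrightarrow> y \<le> x"
    by (metis assms leD le_less linorder_le_less_linear)
  have "\<And>x. x \<in> set xs \<Longrightarrow> card {y \<in> f ` set xs. y \<le> f x} = card {y \<in> set xs. y \<le> x}"
  proof -
    fix x assume x: "x \<in> set xs"
    have "{y \<in> f ` set xs. y \<le> f x} = f ` {y \<in> set xs. y \<le> x}" using le[OF x] by auto
    moreover have "inj_on f {y \<in> set xs. y \<le> x}" using inj by (rule inj_on_subset) auto
    ultimately show "card {y \<in> f ` set xs. y \<le> f x} = card {y \<in> set xs. y \<le> x}"
      by (simp add: card_image)
  qed
  then show ?thesis unfolding red_def list.set_map map_map o_def by (intro map_cong) simp_all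
qed

lemma red_take_red: "red (take m (red w)) = red (take m w)"
  unfolding red_rk[of w] take_map
  by (rule red_map_mono) (meson in_set_takeD rk_mono)

definition cocc :: "nat list \<Rightarrow> nat list \<Rightarrow> bool" where
  "cocc \<pi> \<sigma> \<longleftrightarrow> (\<exists>i. i + length \<sigma> \<le> length \<pi> \<and> red (take (length \<sigma>) (drop i \<pi>)) = \<sigma>)"

lemma cocc_Cons: "cocc (a#xs) \<sigma> \<longleftrightarrow> (length \<sigma> \<le> Suc (length xs) \<and> red (take (length \<sigma>) (a#xs)) = \<sigma>) \<or> cocc xs \<sigma>"
proof
  assume "cocc (a#xs) \<sigma>"
  then obtain i where i: "i + length \<sigma> \<le> length (a#xs)" "red (take (length \<sigma>) (drop i (a#xs))) = \<sigma>"
    unfolding cocc_def by blast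
  show "(length \<sigma> \<le> Suc (length xs) \<and> red (take (length \<sigma>) (a#xs)) = \<sigma>) \<or> cocc xs \<sigma>"
  proof (cases i)
    case 0 then show ?thesis using i by simp
  next
    case (Suc j) then show ?thesis using i unfolding cocc_def by (intro disjI2 exI[of _ j]) simp
  qed
next
  assume "(length \<sigma> \<le> Suc (length xs) \<and> red (take (length \<sigma>) (a#xs)) = \<sigma>) \<or> cocc xs \<sigma>"
  then show "cocc (a#xs) \<sigma>"
  proof
    assume "length \<sigma> \<le> Suc (length xs) \<and> red (take (length \<sigma>) (a#xs)) = \<sigma>"
    then show ?thesis unfolding cocc_def by (intro exI[of _ 0]) simp
  next
    assume "cocc xs \<sigma>"
    then obtain i where "i + length \<sigma> \<le> length xs" "red (take (length \<sigma>) (drop i xs)) = \<sigma>"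
      unfolding cocc_def by blast
    then show ?thesis unfolding cocc_def by (intro exI[of _ "Suc i"]) simp
  qed
qed

lemma cocc_map:
  assumes "\<forall>x\<in>set xs. \<forall>y\<in>set xs. x < y \<longrightarrow> f x < f (y::nat)"
  shows "cocc (map f xs) \<sigma> \<longleftrightarrow> cocc xs \<sigma>"
proof -
  have "\<And>i. red (take (length \<sigma>) (drop i (map f xs))) = red (take (length \<sigma>) (drop i xs))"
    unfolding drop_map take_map
    by (rule red_map_mono) (meson assms in_set_dropD in_set_takeD)
  then show ?thesis unfolding cocc_def by simp
qed

lemma cocc_red: "cocc (red xs) \<sigma> \<longleftrightarrow> cocc xs \<sigma>"
  unfolding red_rk[of xs] by (rule cocc_map) (meson rk_mono)

lemma consec_is:
  assumes "\<forall>x\<in>{1..t-1}. is ! x = is ! (x-1) + 1" "length is = t"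
  shows "is = [is!0..<is!0+t]"
proof -
  have "\<forall>x<t. is!x = is!0 + x"
  proof (intro allI impI)
    fix x show "x < t \<Longrightarrow> is!x = is!0 + x"
    proof (induction x)
      case (Suc x)
      then have "Suc x \<in> {1..t-1}" by auto
      then show ?case using assms(1) Suc by fastforce
    qed simp
  qed
  note H = this
  show ?thesis
  proof (rule nth_equalityI)
    show "length is = length [is!0..<is!0+t]" using assms(2) by simp
    fix i assume i: "i < length is"
    have "[is!0..<is!0+t] ! i = is!0 + i" using i assms(2) by simp
    then show "is ! i = [is!0..<is!0+t] ! i" using H i assms(2) by metis
  qed
qed

lemma map_nth_upt: "i + t \<le> length \<pi> \<Longrightarrow> map ((!) \<pi>) [i..<i+t] = take t (drop i \<pi>)"
  by (intro nth_equalityI) auto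

lemma contains_cocc:
  assumes "\<sigma> \<noteq> []"
  shows "contains \<pi> (\<sigma>, {1..length \<sigma> - 1}) \<longleftrightarrow> cocc \<pi> \<sigma>"
proof
  assume "contains \<pi> (\<sigma>, {1..length \<sigma> - 1})"
  then obtain "is" where h: "length is = length \<sigma>" "\<forall>j\<in>set is. j < length \<pi>"
     "red (map (\<lambda>j. \<pi> ! j) is) = \<sigma>" "\<forall>x\<in>{1..length \<sigma> - 1}. is ! x = is ! (x - 1) + 1"
    unfolding contains_def by auto
  have e: "is = [is!0..<is!0+length \<sigma>]" using consec_is[OF h(4) h(1)] .
  have "is!0 + length \<sigma> - 1 \<in> set [is!0..<is!0+length \<sigma>]" using assms by (cases \<sigma>) auto
  then have "is!0 + length \<sigma> - 1 \<in> set is" using e by metis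
  then have le: "is!0 + length \<sigma> \<le> length \<pi>" using h(2) by fastforce
  have "red (take (length \<sigma>) (drop (is!0) \<pi>)) = \<sigma>"
    using h(3) map_nth_upt[OF le] e by metis
  then show "cocc \<pi> \<sigma>" unfolding cocc_def using le by blast
next
  assume "cocc \<pi> \<sigma>"
  then obtain i where i: "i + length \<sigma> \<le> length \<pi>" "red (take (length \<sigma>) (drop i \<pi>)) = \<sigma>"
    unfolding cocc_def by blast
  show "contains \<pi> (\<sigma>, {1..length \<sigma> - 1})" unfolding contains_def
    apply simp
    apply (rule exI[of _ "[i..<i+length \<sigma>]"])
    using i map_nth_upt[OF i(1)] by auto
qed



lemma perm_len: "is_perm n \<pi> \<Longrightarrow> length \<pi> = n"
  unfolding is_perm_def by (metis card_atLeastAtMost diff_Suc_1 distinct_card)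

lemma red_is_perm: assumes "distinct xs" shows "is_perm (length xs) (red xs)"
proof -
  have inj: "inj_on (rk xs) (set xs)"
    by (metis inj_onI linorder_neq_iff order_less_irrefl rk_mono)
  have d: "distinct (red xs)" unfolding red_rk using assms inj by (simp add: distinct_map)
  have sub: "set (red xs) \<subseteq> {1..length xs}"
  proof
    fix z assume "z \<in> set (red xs)"
    then obtain x where x: "x \<in> set xs" "z = rk xs x" unfolding red_rk by auto
    have "{y \<in> set xs. y \<le> x} \<noteq> {}" using x by auto
    then have "1 \<le> z" unfolding x rk_def by (simp add: Suc_leI card_gt_0_iff)
    moreover have "z \<le> card (set xs)" unfolding x rk_def by (intro card_mono) auto
    ultimately show "z \<in> {1..length xs}" using assms by (simp add: distinct_card)
  qed
  have "card (set (red xs)) = length xs" using d distinct_card[OF d] by (simp add: red_def)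
  then have "set (red xs) = {1..length xs}" using sub by (intro card_subset_eq) auto
  then show ?thesis using d unfolding is_perm_def by simp
qed

lemma red_perm: assumes "is_perm n \<tau>" shows "red \<tau> = \<tau>"
proof -
  have "\<And>x. x \<in> set \<tau> \<Longrightarrow> rk \<tau> x = x"
  proof -
    fix x assume "x \<in> set \<tau>"
    then have "x \<le> n" using assms unfolding is_perm_def by auto
    then have "{y \<in> set \<tau>. y \<le> x} = {1..x}" using assms unfolding is_perm_def by auto
    then show "rk \<tau> x = x" unfolding rk_def by simp
  qed
  then show ?thesis unfolding red_rk by (simp add: map_idI)
qed

lemma red_tl_perm:
  assumes "is_perm n (a # xs)"
  shows "red xs = map (\<lambda>x. if a < x then x - 1 else x) xs"
proof -
  have S: "set xs = {1..n} - {a}" "a \<notin> set xs" using assms unfolding is_perm_def by auto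
  have "\<And>x. x \<in> set xs \<Longrightarrow> rk xs x = (if a < x then x - 1 else x)"
  proof -
    fix x assume x: "x \<in> set xs"
    have xx: "x \<in> {1..n}" "x \<noteq> a" using S x by blast+
    have "{y \<in> set xs. y \<le> x} = {y \<in> {1..n} - {a}. y \<le> x}" using S(1) by simp
    also have "\<dots> = {1..x} - {a}" using xx by auto
    finally have "{y \<in> set xs. y \<le> x} = {1..x} - {a}" .
    moreover have "card ({1..x} - {a}) = (if a < x then x - 1 else x)"
      using \<open>x \<noteq> a\<close> assms unfolding is_perm_def by (auto simp: card_Diff_singleton_if)
    ultimately show "rk xs x = (if a < x then x - 1 else x)" unfolding rk_def by simp
  qed
  then show ?thesis unfolding red_rk by simp
qed

lemma keep1: "keep {1} xs = tl xs"
proof (cases xs)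
  case (Cons a ys)
  have "{j. Suc j \<in> {i. Suc i \<notin> {1::nat}}} = UNIV" by auto
  moreover have "nths ys UNIV = ys" by (rule nths_all) simp
  ultimately show ?thesis unfolding keep_def Cons by (simp only: nths_Cons) simp
qed (simp add: keep_def)

lemma prefix_take: "length w \<le> length \<pi> \<Longrightarrow> (\<forall>i<length w. \<pi> ! i = w ! i) \<longleftrightarrow> take (length w) \<pi> = w"
proof
  assume "length w \<le> length \<pi>" "\<forall>i<length w. \<pi> ! i = w ! i"
  then show "take (length w) \<pi> = w" by (intro nth_equalityI) auto
qed (metis nth_take)



theorem mainTheorem2:
  fixes \<sigma> p :: "nat list" and t k :: nat
  assumes "is_perm t \<sigma>" and "is_perm k p"
    and "red (take (min t k) p) \<noteq> red (take (min t k) \<sigma>)"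
  shows "rev_deletable p {(\<sigma>, {1..t - 1})} {1}"
proof -
  have lt: "length \<sigma> = t" using assms(1) by (rule perm_len)
  have lk: "length p = k" using assms(2) by (rule perm_len)
  have k0: "k \<noteq> 0"
  proof
    assume "k = 0" then show False using assms(3) by simp
  qed
  have t0: "t \<noteq> 0"
  proof
    assume "t = 0" then show False using assms(3) by simp
  qed
  have sne: "\<sigma> \<noteq> []" using lt t0 by auto
  have avB: "\<And>\<pi>. avoids {(\<sigma>, {1..t - 1})} \<pi> \<longleftrightarrow> \<not> cocc \<pi> \<sigma>"
    unfolding avoids_def using contains_cocc[OF sne] lt by simp
  have start: "False" if "red w = p" "take k \<pi> = w" "t \<le> length \<pi>" "red (take t \<pi>) = \<sigma>" for w \<pi>
  proof -
    define m where "m = min t k"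
    have "red (take m p) = red (take m (red w))" using that(1) by simp
    also have "\<dots> = red (take m w)" by (rule red_take_red)
    also have "\<dots> = red (take m \<pi>)"
    proof -
      have "take m w = take m \<pi>" unfolding that(2)[symmetric] by (simp add: m_def min_def)
      then show ?thesis by simp
    qed
    finally have 1: "red (take m p) = red (take m \<pi>)" .
    have "red (take m \<sigma>) = red (take m (red (take t \<pi>)))" using that(4) by simp
    also have "\<dots> = red (take m (take t \<pi>))" by (rule red_take_red)
    also have "\<dots> = red (take m \<pi>)" by (simp add: m_def)
    finally show False using 1 assms(3) m_def by simp
  qed
  show ?thesis unfolding rev_deletable_def
  proof (intro conjI allI impI)
    show "{1} \<subseteq> {1..length p}" using lk k0 by simp
    fix n w
    assume A: "length w = length p \<and> distinct w \<and> set w \<subseteq> {1..n} \<and> red w = p \<and>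
        Sprefix n {(\<sigma>, {1..t - 1})} p w \<noteq> {}"
    have lw: "length w = k" and dw: "distinct w" and sw: "set w \<subseteq> {1..n}" and rw: "red w = p"
      using A lk by auto
    define a where "a = w ! 0"
    have aw: "a \<in> set w" using lw k0 a_def by simp
    have an: "a \<in> {1..n}" using aw sw by auto
    have kn: "k \<le> n" using card_mono[OF _ sw] distinct_card[OF dw] lw by simp
    have wa: "w = a # tl w" using lw k0 a_def by (cases w) auto
    have atl: "a \<notin> set (tl w)" using dw wa by (metis distinct.simps(2))
    define g where "g = (\<lambda>x::nat. if a < x then x - 1 else x)"
    define h where "h = (\<lambda>x::nat. if a \<le> x then x + 1 else x)"
    have hg: "h (g x) = x" if "x \<noteq> a" for x using that unfolding g_def h_def by auto
    have gh: "g (h x) = x" for x unfolding g_def h_def by auto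
    have dword: "d_word {1} w = map g (tl w)"
    proof -
      have "\<And>x. card {r \<in> {1::nat}. 1 \<le> r \<and> r \<le> length w \<and> w ! (r - 1) < x} = (if a < x then 1 else 0)"
      proof -
        fix x
        have "{r \<in> {1::nat}. 1 \<le> r \<and> r \<le> length w \<and> w ! (r - 1) < x} = (if a < x then {1} else {})"
          using lw k0 a_def by (auto simp: Suc_le_eq)
        then show "card {r \<in> {1::nat}. 1 \<le> r \<and> r \<le> length w \<and> w ! (r - 1) < x} = (if a < x then 1 else 0)"
          by simp
      qed
      then show ?thesis unfolding d_word_def keep1 g_def by (auto intro: map_cong)
    qed
    have dp: "d_perm {1} = (\<lambda>\<pi>. red (tl \<pi>))" unfolding d_perm_def keep1 by (rule ext) simp
    define S where "S = {\<pi>. is_perm n \<pi> \<and> \<not> cocc \<pi> \<sigma> \<and> take k \<pi> = w}"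
    define T where "T = {\<tau>. is_perm (n - 1) \<tau> \<and> \<not> cocc \<tau> \<sigma> \<and> take (k - 1) \<tau> = map g (tl w)}"
    have SP: "Sprefix n {(\<sigma>, {1..t - 1})} p w = S"
    proof (rule set_eqI)
      fix \<pi>
      show "\<pi> \<in> Sprefix n {(\<sigma>, {1..t - 1})} p w \<longleftrightarrow> \<pi> \<in> S"
      proof (cases "is_perm n \<pi>")
        case True
        then have "length w \<le> length \<pi>" using perm_len kn lw by simp
        then show ?thesis unfolding Sprefix_def S_def avB mem_Collect_eq
          using prefix_take[of w \<pi>] lw True by simp
      next
        case False then show ?thesis unfolding Sprefix_def S_def by simp
      qed
    qed
    have ST: "Sprefix (n - card {1::nat}) {(\<sigma>, {1..t - 1})} (d_perm {1} p) (d_word {1} w) = T"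
    proof (rule set_eqI)
      fix \<pi>
      show "\<pi> \<in> Sprefix (n - card {1::nat}) {(\<sigma>, {1..t - 1})} (d_perm {1} p) (d_word {1} w) \<longleftrightarrow> \<pi> \<in> T"
      proof (cases "is_perm (n - 1) \<pi>")
        case True
        then have "length (map g (tl w)) \<le> length \<pi>" using perm_len kn lw by simp
        moreover have "length (map g (tl w)) = k - 1" using lw by simp
        ultimately show ?thesis unfolding Sprefix_def T_def avB mem_Collect_eq dword
          using prefix_take[of "map g (tl w)" \<pi>] True by simp
      next
        case False then show ?thesis unfolding Sprefix_def T_def by simp
      qed
    qed
    have Sfacts: "\<pi> = a # tl \<pi> \<and> red (tl \<pi>) = map g (tl \<pi>) \<and> tl w = take (k - 1) (tl \<pi>)
        \<and> distinct (tl \<pi>) \<and> length (tl \<pi>) = n - 1 \<and> a \<notin> set (tl \<pi>) \<and> \<not> cocc (tl \<pi>) \<sigma>"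
      if "\<pi> \<in> S" for \<pi>
    proof -
      have p: "is_perm n \<pi>" "\<not> cocc \<pi> \<sigma>" "take k \<pi> = w" using that S_def by auto
      have ln: "length \<pi> = n" using p(1) by (rule perm_len)
      have "\<pi> ! 0 = a" using p(3) k0 a_def by (metis nth_take not_gr0)
      then have pa: "\<pi> = a # tl \<pi>" using ln an by (cases \<pi>) auto
      have 1: "red (tl \<pi>) = map g (tl \<pi>)" using red_tl_perm[of n a "tl \<pi>"] p(1) pa g_def by simp
      have 2: "tl w = take (k - 1) (tl \<pi>)" by (metis p(3) tl_take)
      have d: "distinct \<pi>" using p(1) is_perm_def by simp
      have 3: "distinct (tl \<pi>)" "a \<notin> set (tl \<pi>)" using d pa by (metis distinct.simps(2))+
      have 4: "\<not> cocc (tl \<pi>) \<sigma>" using p(2) pa cocc_Cons[of a "tl \<pi>" \<sigma>] by auto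
      show ?thesis using pa 1 2 3 4 ln by simp
    qed
    have inj: "inj_on (\<lambda>\<pi>. red (tl \<pi>)) S"
    proof (rule inj_onI)
      fix \<pi>1 \<pi>2 assume i: "\<pi>1 \<in> S" "\<pi>2 \<in> S" "red (tl \<pi>1) = red (tl \<pi>2)"
      have e: "map g (tl \<pi>1) = map g (tl \<pi>2)" using i Sfacts by metis
      have "inj_on g (set (tl \<pi>1) \<union> set (tl \<pi>2))"
        using Sfacts[OF i(1)] Sfacts[OF i(2)] hg by (metis Un_iff inj_onI)
      then have "tl \<pi>1 = tl \<pi>2" using e map_inj_on by blast
      then show "\<pi>1 = \<pi>2" using Sfacts[OF i(1)] Sfacts[OF i(2)] by metis
    qed
    have img1: "(\<lambda>\<pi>. red (tl \<pi>)) ` S \<subseteq> T"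
    proof
      fix \<tau> assume "\<tau> \<in> (\<lambda>\<pi>. red (tl \<pi>)) ` S"
      then obtain \<pi> where pi: "\<pi> \<in> S" "\<tau> = red (tl \<pi>)" by blast
      note F = Sfacts[OF pi(1)]
      have "is_perm (n - 1) \<tau>" using red_is_perm[of "tl \<pi>"] F pi(2) by simp
      moreover have "\<not> cocc \<tau> \<sigma>" using F cocc_red[of "tl \<pi>" \<sigma>] unfolding pi(2) by blast
      moreover have "take (k - 1) \<tau> = map g (tl w)" using F pi(2) by (simp add: take_map)
      ultimately show "\<tau> \<in> T" unfolding T_def by simp
    qed
    have img2: "T \<subseteq> (\<lambda>\<pi>. red (tl \<pi>)) ` S"
    proof
      fix \<tau> assume "\<tau> \<in> T"
      then have tp: "is_perm (n - 1) \<tau>" "\<not> cocc \<tau> \<sigma>" "take (k - 1) \<tau> = map g (tl w)"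
        unfolding T_def by auto
      define \<pi> where "\<pi> = a # map h \<tau>"
      have hmono: "\<forall>x\<in>set \<tau>. \<forall>y\<in>set \<tau>. x < y \<longrightarrow> h x < h y" unfolding h_def by auto
      have r: "red (tl \<pi>) = \<tau>" using red_map_mono[OF hmono] red_perm[OF tp(1)] \<pi>_def by simp
      have injh: "inj h" using gh by (metis injI)
      have ha: "a \<notin> h ` set \<tau>" unfolding h_def by auto
      have st: "set \<tau> = {1..n-1}" using tp(1) is_perm_def by simp
      have himg: "h ` {1..n-1} = {1..n} - {a}"
      proof
        show "h ` {1..n-1} \<subseteq> {1..n} - {a}" using an unfolding h_def by auto
        show "{1..n} - {a} \<subseteq> h ` {1..n-1}"
        proof
          fix y assume y: "y \<in> {1..n} - {a}"
          have "g y \<in> {1..n-1}" using y an unfolding g_def by auto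
          then show "y \<in> h ` {1..n-1}" using hg[of y] y by (metis DiffE image_eqI insertI1)
        qed
      qed
      have "distinct \<pi>" unfolding \<pi>_def using ha injh tp(1) is_perm_def
        by (simp add: distinct_map inj_on_subset[OF injh])
      moreover have "set \<pi> = {1..n}" unfolding \<pi>_def using himg st an by auto
      ultimately have pp: "is_perm n \<pi>" unfolding is_perm_def by simp
      have tk: "take k \<pi> = w"
      proof -
        have "take k \<pi> = a # map h (take (k - 1) \<tau>)" unfolding \<pi>_def using k0
          by (cases k) (simp_all add: take_map)
        also have "\<dots> = a # map h (map g (tl w))" using tp(3) by simp
        also have "\<dots> = a # tl w"
        proof -
          have "map (h \<circ> g) (tl w) = tl w"
          proof (rule map_idI)
            fix x assume "x \<in> set (tl w)"
            then have "x \<noteq> a" using atl by auto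
            then show "(h \<circ> g) x = x" using hg by simp
          qed
          then show ?thesis by simp
        qed
        finally show ?thesis using wa by simp
      qed
      have "\<not> cocc \<pi> \<sigma>"
      proof
        assume "cocc \<pi> \<sigma>"
        then have "(t \<le> length \<pi> \<and> red (take t \<pi>) = \<sigma>) \<or> cocc (map h \<tau>) \<sigma>"
          unfolding \<pi>_def cocc_Cons lt by simp
        then show False using start[OF rw tk] cocc_map[OF hmono] tp(2) by blast
      qed
      then have "\<pi> \<in> S" using pp tk S_def by simp
      then show "\<tau> \<in> (\<lambda>\<pi>. red (tl \<pi>)) ` S" using r by (metis image_eqI)
    qed
    show "bij_betw (d_perm {1}) (Sprefix n {(\<sigma>, {1..t - 1})} p w)
          (Sprefix (n - card {1::nat}) {(\<sigma>, {1..t - 1})} (d_perm {1} p) (d_word {1} w))"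
    proof -
      have "bij_betw (\<lambda>\<pi>. red (tl \<pi>)) S T"
        unfolding bij_betw_def using inj img1 img2 by blast
      then show ?thesis unfolding SP ST by (simp only: dp)
    qed
  qed
qed

end
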